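(* Let $E>0$, $\epsilon>0$ with $1-2\epsilon\ge0$, and let $B\in\mathbb R^3$ be a unit vector. Let $\mu,\mu_1,\mu_2$ be distinct points on the sphere $\sqrt E S^2=\{x\in\mathbb R^3:|x|=\sqrt E\}$, and assume that $$\left\langle\frac{\mu_i-\mu}{|\mu_i-\mu|},B\right\rangle>\sqrt{1-2\epsilon}\quad\text{for } i=1,2.$$ Then $|\mu_2-\mu_1|\le16\sqrt{\epsilon E}$. *)

theory Defs
  imports "HOL-Analysis.Analysis"
begin

end

theory Submission
  imports Defs
begin

lemma chord:
  fixes m a :: "'a::real_inner"
  assumes "norm a = norm m" "a \<noteq> m"
  shows "norm (a - m) = - 2 * (m \<bullet> ((a - m) /\<^sub>R norm (a - m)))"
proof -
  define d where "d = a - m"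
  have n: "norm d > 0" using assms d_def by simp
  have "(m + d) \<bullet> (m + d) = m \<bullet> m" using assms(1) d_def
    by (simp add: dot_square_norm)
  hence "2 * (m \<bullet> d) + d \<bullet> d = 0" by (simp add: algebra_simps inner_commute)
  hence "norm d ^ 2 = - 2 * (m \<bullet> d)" by (simp add: power2_norm_eq_inner)
  hence "norm d = - 2 * (m \<bullet> d) / norm d" using n by (simp add: power2_eq_square field_simps)
  thus ?thesis using d_def by (simp add: divide_inverse mult.commute)
qed

lemma unit_close:
  fixes u B :: "'a::real_inner"
  assumes "norm u = 1" "norm B = 1" "u \<bullet> B > sqrt (1 - 2 * e)" "1 - 2*e \<ge> 0" "e > 0"
  shows "norm (u - B) \<le> 2 * sqrt e"
proof -
  define s where "s = sqrt (1 - 2*e)"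
  have s0: "s \<ge> 0" "s ^ 2 = 1 - 2*e" using assms by (simp_all add: s_def)
  have s1: "s \<le> 1" using power2_le_imp_le[of s 1] s0 assms by simp
  have q: "0 \<le> (1 - s) * s" using s0 s1 by (intro mult_nonneg_nonneg) auto
  have "(1 - s) * (1 + s) = (1 - s) + (1 - s) * s" by (simp add: algebra_simps)
  hence "1 - s \<le> (1 - s) * (1 + s)" using q by linarith
  moreover have "(1 - s) * (1 + s) = 1 - s ^ 2" by (simp add: algebra_simps power2_eq_square)
  ultimately have h: "1 - s \<le> 2 * e" using s0 by linarith
  have uu: "u \<bullet> u = 1" "B \<bullet> B = 1" using assms(1,2) by (simp_all add: dot_square_norm)
  have "norm (u - B) ^ 2 = (u - B) \<bullet> (u - B)" by (simp only: power2_norm_eq_inner)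
  also have "\<dots> = 2 - 2 * (u \<bullet> B)" using uu
    by (simp add: inner_diff_left inner_diff_right inner_commute)
  also have "\<dots> \<le> (2 * sqrt e) ^ 2"
  proof -
    have "(2 * sqrt e) ^ 2 = 4 * e" using assms(5) by (simp add: power_mult_distrib)
    thus ?thesis using h assms(3) s_def by linarith
  qed
  finally have "norm (u - B) ^ 2 \<le> (2 * sqrt e) ^ 2" .
  thus ?thesis by (rule power2_le_imp_le) (use assms(5) in simp)
qed

theorem lemma5p5:
  fixes E \<epsilon> :: real and B \<mu> \<mu>1 \<mu>2 :: "real ^ 3"
  assumes "E > 0" and "\<epsilon> > 0" and "1 - 2 * \<epsilon> \<ge> 0"
    and "norm B = 1"
    and "norm \<mu> = sqrt E" and "norm \<mu>1 = sqrt E" and "norm \<mu>2 = sqrt E"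
    and "\<mu> \<noteq> \<mu>1" and "\<mu> \<noteq> \<mu>2" and "\<mu>1 \<noteq> \<mu>2"
    and "((\<mu>1 - \<mu>) /\<^sub>R norm (\<mu>1 - \<mu>)) \<bullet> B > sqrt (1 - 2 * \<epsilon>)"
    and "((\<mu>2 - \<mu>) /\<^sub>R norm (\<mu>2 - \<mu>)) \<bullet> B > sqrt (1 - 2 * \<epsilon>)"
  shows "norm (\<mu>2 - \<mu>1) \<le> 16 * sqrt (\<epsilon> * E)"
proof -
  define R where "R = sqrt E"
  define n1 where "n1 = norm (\<mu>1 - \<mu>)"
  define n2 where "n2 = norm (\<mu>2 - \<mu>)"
  define u1 where "u1 = (\<mu>1 - \<mu>) /\<^sub>R n1"
  define u2 where "u2 = (\<mu>2 - \<mu>) /\<^sub>R n2"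
  have p1: "n1 > 0" "n2 > 0" using assms(8,9) n1_def n2_def by auto
  have nu: "norm u1 = 1" "norm u2 = 1" using p1 u1_def u2_def n1_def n2_def by auto
  have c1: "n1 = -2 * (\<mu> \<bullet> u1)" using chord[of \<mu>1 \<mu>] assms(5,6,8) unfolding n1_def u1_def by simp
  have c2: "n2 = -2 * (\<mu> \<bullet> u2)" using chord[of \<mu>2 \<mu>] assms(5,7,9) unfolding n2_def u2_def by simp
  have e1: "\<mu>1 = \<mu> + n1 *\<^sub>R u1" using p1 u1_def by simp
  have e2: "\<mu>2 = \<mu> + n2 *\<^sub>R u2" using p1 u2_def by simp
  have "\<mu>2 - \<mu>1 = (n2 - n1) *\<^sub>R u2 + n1 *\<^sub>R (u2 - u1)"
    using e1 e2 by (simp add: algebra_simps)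
  hence "norm (\<mu>2 - \<mu>1) \<le> norm ((n2 - n1) *\<^sub>R u2) + norm (n1 *\<^sub>R (u2 - u1))"
    by (simp only: norm_triangle_ineq)
  hence "norm (\<mu>2 - \<mu>1) \<le> \<bar>n2 - n1\<bar> + n1 * norm (u2 - u1)"
    using nu p1 by simp
  moreover have "\<bar>n2 - n1\<bar> \<le> 2 * R * norm (u2 - u1)"
  proof -
    have "n2 - n1 = 2 * (\<mu> \<bullet> (u1 - u2))" using c1 c2 by (simp add: inner_diff_right)
    hence "\<bar>n2 - n1\<bar> = 2 * \<bar>\<mu> \<bullet> (u1 - u2)\<bar>" by (simp add: abs_mult)
    also have "\<dots> \<le> 2 * (norm \<mu> * norm (u1 - u2))" using Cauchy_Schwarz_ineq2 by simp
    also have "\<dots> = 2 * (norm \<mu> * norm (u2 - u1))" by (simp add: norm_minus_commute)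
    finally show ?thesis using assms(5) R_def by simp
  qed
  moreover have "n1 \<le> 2 * R"
  proof -
    have "- (\<mu> \<bullet> u1) \<le> norm \<mu> * norm u1"
      by (metis Cauchy_Schwarz_ineq2 abs_le_iff)
    thus ?thesis using c1 nu assms(5) R_def by simp
  qed
  moreover have "norm (u2 - u1) \<le> 4 * sqrt \<epsilon>"
  proof -
    have "norm (u1 - B) \<le> 2 * sqrt \<epsilon>" using unit_close[of u1 B \<epsilon>] nu(1) assms(2,3,4,11) unfolding u1_def n1_def by simp
    moreover have "norm (u2 - B) \<le> 2 * sqrt \<epsilon>" using unit_close[of u2 B \<epsilon>] nu(2) assms(2,3,4,12) unfolding u2_def n2_def by simp
    moreover have "norm (u2 - u1) \<le> norm (u2 - B) + norm (u1 - B)"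
    proof -
      have "u2 - u1 = (u2 - B) + (B - u1)" by simp
      hence "norm (u2 - u1) \<le> norm (u2 - B) + norm (B - u1)" by (metis norm_triangle_ineq)
      thus ?thesis by (simp add: norm_minus_commute)
    qed
    ultimately show ?thesis by simp
  qed
  ultimately have "norm (\<mu>2 - \<mu>1) \<le> 2 * R * (4 * sqrt \<epsilon>) + 2 * R * (4 * sqrt \<epsilon>)"
  proof -
    have "n1 * norm (u2 - u1) \<le> 2 * R * (4 * sqrt \<epsilon>)"
      using \<open>n1 \<le> 2 * R\<close> \<open>norm (u2 - u1) \<le> 4 * sqrt \<epsilon>\<close> p1 by (intro mult_mono) auto
    moreover have "\<bar>n2 - n1\<bar> \<le> 2 * R * (4 * sqrt \<epsilon>)"
      using \<open>\<bar>n2 - n1\<bar> \<le> 2 * R * norm (u2 - u1)\<close> \<open>norm (u2 - u1) \<le> 4 * sqrt \<epsilon>\<close> R_def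
    proof -
      have "2 * R * norm (u2 - u1) \<le> 2 * R * (4 * sqrt \<epsilon>)"
        by (rule mult_left_mono) (use \<open>norm (u2 - u1) \<le> 4 * sqrt \<epsilon>\<close> R_def assms(1) in auto)
      thus ?thesis using \<open>\<bar>n2 - n1\<bar> \<le> 2 * R * norm (u2 - u1)\<close> by linarith
    qed
    ultimately show ?thesis using \<open>norm (\<mu>2 - \<mu>1) \<le> \<bar>n2 - n1\<bar> + n1 * norm (u2 - u1)\<close> by linarith
  qed
  moreover have "2 * R * (4 * sqrt \<epsilon>) + 2 * R * (4 * sqrt \<epsilon>) = 16 * sqrt (\<epsilon> * E)"
    by (simp add: R_def real_sqrt_mult algebra_simps)
  ultimately show ?thesis by linarith
qed

end
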